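(* In the setting below, suppose that the function $x\mapsto f(x)+g(Ax)$ is bounded below on $\mathbb R^n$ (equivalently, $F(x)=f(x)+g(Ax)+\Phi_{+,\lambda}(Bx-b)$ is bounded below) and that $\{x:\ x\in\operatorname{ri}(\operatorname{dom}f),\ Ax\in\operatorname{ri}(\operatorname{dom}g),\ Bx\le b\}\neq\emptyset$, where "$\operatorname{ri}$" may be omitted for $f$ (resp. $g$) if $f$ (resp. $g$) is polyhedral. Then for every $\mu>0$ the problem $\inf_{w=[y;z]}\ \Xi(w)+\Psi_{+,\mu}(z)$ has a global minimizer.
   Context: Let $f:\mathbb R^n\to(-\infty,\infty]$ and $g:\mathbb R^m\to(-\infty,\infty]$ be proper, lsc and convex, with convex conjugates $f^*(q)=\sup_x\{\langle q,x\rangle-f(x)\}$, $g^*$. Let $A\in\mathbb R^{m\times n}$, $B\in\mathbb R^{r\times n}$, $b\in\mathbb R^r$, $\lambda,\mu\in\mathbb R^r$ with $\lambda,\mu>0$. $\Phi_{+,\lambda}(u)=\sum_i\lambda_i\mathbf 1_{\{u_i>0\}}$. For $w=[y;z]\in\mathbb R^m\times\mathbb R^r$, $\Xi(w):=f^*(-A^\top y-B^\top z)+g^*(y)+\langle b,z\rangle$. $\Psi_{+,\mu}(z)=\sum_{i=1}^r\mu_i\mathbf 1_{\{z_i\ne0\}}+\delta(z\mid\mathbb R^r_+)$. $\operatorname{ri}$ denotes relative interior. *)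

theory Defs
  imports "HOL-Analysis.Analysis"
begin

definition edom :: "('a \<Rightarrow> ereal) \<Rightarrow> 'a set" where
  "edom f = {x. f x < \<infinity>}"

definition epigraph_e :: "('a \<Rightarrow> ereal) \<Rightarrow> ('a \<times> real) set" where
  "epigraph_e f = {(x, t). f x \<le> ereal t}"

definition proper_fun :: "('a \<Rightarrow> ereal) \<Rightarrow> bool" where
  "proper_fun f \<longleftrightarrow> (\<forall>x. f x \<noteq> -\<infinity>) \<and> (\<exists>x. f x \<noteq> \<infinity>)"

definition convex_fun :: "('a::real_vector \<Rightarrow> ereal) \<Rightarrow> bool" where
  "convex_fun f \<longleftrightarrow> convex (epigraph_e f)"

definition lsc_fun :: "('a::topological_space \<Rightarrow> ereal) \<Rightarrow> bool" where
  "lsc_fun f \<longleftrightarrow> (\<forall>c. closed {x. f x \<le> c})"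

definition polyhedral_fun :: "('a::euclidean_space \<Rightarrow> ereal) \<Rightarrow> bool" where
  "polyhedral_fun f \<longleftrightarrow> polyhedron (epigraph_e f)"

definition conj_fun :: "('a::real_inner \<Rightarrow> ereal) \<Rightarrow> 'a \<Rightarrow> ereal" where
  "conj_fun f q = (SUP x. ereal (q \<bullet> x) - f x)"

definition Xi_fun ::
  "(real^'n \<Rightarrow> ereal) \<Rightarrow> (real^'m \<Rightarrow> ereal) \<Rightarrow> real^'n^'m \<Rightarrow> real^'n^'r \<Rightarrow> real^'r
     \<Rightarrow> real^'m \<Rightarrow> real^'r \<Rightarrow> ereal" where
  "Xi_fun f g A B b y z =
     conj_fun f (- (transpose A *v y) - (transpose B *v z)) + conj_fun g y + ereal (b \<bullet> z)"

definition Psi_plus :: "real^'r \<Rightarrow> real^'r \<Rightarrow> ereal" where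
  "Psi_plus \<mu> z =
     ereal (\<Sum>i\<in>UNIV. if z $ i \<noteq> 0 then \<mu> $ i else 0)
     + (if (\<forall>i. 0 \<le> z $ i) then 0 else \<infinity>)"

end

theory Submission
  imports Defs
begin

lemma farkas:
  fixes c :: "'i \<Rightarrow> 'a::euclidean_space" and e :: "'i \<Rightarrow> real"
  assumes fin: "finite I" and w1: "\<forall>i\<in>I. c i \<bullet> w1 \<le> e i"
    and le: "\<And>w. (\<forall>i\<in>I. c i \<bullet> w \<le> e i) \<Longrightarrow> a \<bullet> w \<le> \<beta>"
  shows "\<exists>l. (\<forall>i\<in>I. 0 \<le> l i) \<and> a = (\<Sum>i\<in>I. l i *\<^sub>R c i) \<and> (\<Sum>i\<in>I. l i * e i) \<le> \<beta>"
proof -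
  define K where "K = {(\<Sum>i\<in>I. l i *\<^sub>R c i, (\<Sum>i\<in>I. l i * e i) + s) | l s. (\<forall>i\<in>I. 0 \<le> l i) \<and> 0 \<le> s}"
  define G where "G = insert (0,1) ((\<lambda>i. (c i, e i)) ` I)"
  have GK: "G \<subseteq> K"
  proof
    fix x assume "x \<in> G"
    then consider "x = (0,1)" | j where "j \<in> I" "x = (c j, e j)" unfolding G_def by auto
    then show "x \<in> K"
    proof cases
      case 1 then show ?thesis unfolding K_def
        by (rule_tac CollectI, rule_tac x="\<lambda>i. 0" in exI, rule_tac x=1 in exI) auto
    next
      case 2
      have s1: "(\<Sum>i\<in>I. (if i = j then 1 else 0) *\<^sub>R c i) = (\<Sum>i\<in>I. if i = j then c i else 0)"
        by (rule sum.cong) auto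
      have s2: "(\<Sum>i\<in>I. (if i = j then 1 else 0) * e i) = (\<Sum>i\<in>I. if i = j then e i else 0)"
        by (rule sum.cong) auto
      show ?thesis unfolding K_def
        by (rule_tac CollectI, rule_tac x="\<lambda>i. if i = j then 1 else 0" in exI, rule_tac x=0 in exI)
          (use 2 s1 s2 fin in \<open>auto\<close>)
    qed
  qed
  have ccK: "convex_cone K"
    unfolding convex_cone_iff
  proof (intro conjI ballI allI impI)
    show "0 \<in> K" unfolding K_def
      by (rule CollectI, rule_tac x="\<lambda>i. 0" in exI, rule_tac x=0 in exI) (auto simp: zero_prod_def)
  next
    fix x y assume "x \<in> K" "y \<in> K"
    then obtain l s l' s' where x: "x = (\<Sum>i\<in>I. l i *\<^sub>R c i, (\<Sum>i\<in>I. l i * e i) + s)" "\<forall>i\<in>I. 0 \<le> l i" "0 \<le> s"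
      and y: "y = (\<Sum>i\<in>I. l' i *\<^sub>R c i, (\<Sum>i\<in>I. l' i * e i) + s')" "\<forall>i\<in>I. 0 \<le> l' i" "0 \<le> s'"
      unfolding K_def by blast
    show "x + y \<in> K" unfolding K_def
      by (rule CollectI, rule_tac x="\<lambda>i. l i + l' i" in exI, rule_tac x="s + s'" in exI)
        (use x y in \<open>auto simp: sum.distrib scaleR_add_left distrib_right\<close>)
  next
    fix x and k :: real assume "x \<in> K" "0 \<le> k"
    then obtain l s where x: "x = (\<Sum>i\<in>I. l i *\<^sub>R c i, (\<Sum>i\<in>I. l i * e i) + s)" "\<forall>i\<in>I. 0 \<le> l i" "0 \<le> s"
      unfolding K_def by blast
    show "k *\<^sub>R x \<in> K" unfolding K_def
      by (rule CollectI, rule_tac x="\<lambda>i. k * l i" in exI, rule_tac x="k * s" in exI)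
        (use x \<open>0 \<le> k\<close> in \<open>auto simp: scaleR_sum_right sum_distrib_left distrib_left mult.assoc\<close>)
  qed
  have hK: "convex_cone hull G \<subseteq> K"
    using GK ccK by (rule hull_minimal)
  have finG: "finite G" unfolding G_def using fin by auto
  have clo: "closed (convex_cone hull G)" by (rule closed_convex_cone_hull[OF finG])
  have cc: "convex_cone (convex_cone hull G)"
    by (simp add: convex_cone_convex_cone_hull)
  then have cvx: "convex (convex_cone hull G)" unfolding convex_cone_def by auto
  show ?thesis
  proof (cases "(a,\<beta>) \<in> convex_cone hull G")
    case True
    then have "(a,\<beta>) \<in> K" using hK by auto
    then obtain l s where "(a,\<beta>) = (\<Sum>i\<in>I. l i *\<^sub>R c i, (\<Sum>i\<in>I. l i * e i) + s)" "\<forall>i\<in>I. 0 \<le> l i" "0 \<le> s"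
      unfolding K_def by blast
    then show ?thesis by (intro exI[of _ l]) auto
  next
    case False
    from separating_hyperplane_closed_point[OF cvx clo False]
    obtain q \<zeta> where q1: "q \<bullet> (a,\<beta>) < \<zeta>" and q2: "\<forall>x\<in>convex_cone hull G. \<zeta> < q \<bullet> x" by blast
    have z0: "0 \<in> convex_cone hull G" using cc by (simp add: convex_cone_iff)
    then have "\<zeta> < 0" using q2 by force
    have pos: "0 \<le> q \<bullet> x" if "x \<in> convex_cone hull G" for x
    proof (rule ccontr)
      assume "\<not> 0 \<le> q \<bullet> x"
      then have n: "q \<bullet> x < 0" by simp
      define k where "k = 2 * \<zeta> / (q \<bullet> x)"
      have "0 \<le> k" unfolding k_def using n \<open>\<zeta> < 0\<close> by (simp add: divide_nonpos_neg)
      then have "k *\<^sub>R x \<in> convex_cone hull G" using cc that by (simp add: convex_cone_iff)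
      then have "\<zeta> < q \<bullet> (k *\<^sub>R x)" using q2 by blast
      also have "q \<bullet> (k *\<^sub>R x) = 2 * \<zeta>" unfolding k_def using n by simp
      finally show False using \<open>\<zeta> < 0\<close> by simp
    qed
    obtain v \<tau> where qv: "q = (v, \<tau>)" by (cases q)
    have gi: "0 \<le> v \<bullet> c i + \<tau> * e i" if "i \<in> I" for i
      using pos[of "(c i, e i)"] hull_inc[of "(c i, e i)" G] that unfolding G_def qv by auto
    have t0: "0 \<le> \<tau>"
      using pos[of "(0, 1)"] hull_inc[of "(0,1)" G] unfolding G_def qv by auto
    have va: "v \<bullet> a + \<tau> * \<beta> < 0" using q1 \<open>\<zeta> < 0\<close> unfolding qv by simp
    show ?thesis
    proof (cases "\<tau> = 0")
      case False
      then have tp: "0 < \<tau>" using t0 by simp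
      define w where "w = (- 1 / \<tau>) *\<^sub>R v"
      have "\<forall>i\<in>I. c i \<bullet> w \<le> e i"
      proof
        fix i assume "i \<in> I"
        from gi[OF this] have "- (v \<bullet> c i) \<le> e i * \<tau>" by (simp add: algebra_simps)
        then have "- (v \<bullet> c i) / \<tau> \<le> e i" using tp by (metis pos_divide_le_eq)
        then show "c i \<bullet> w \<le> e i" unfolding w_def by (simp add: inner_commute)
      qed
      then have "a \<bullet> w \<le> \<beta>" by (rule le)
      then have "- (v \<bullet> a) / \<tau> \<le> \<beta>" unfolding w_def by (simp add: inner_commute)
      then have "- (v \<bullet> a) / \<tau> \<le> \<beta>" by simp
      then have "- (v \<bullet> a) \<le> \<beta> * \<tau>" using tp by (metis pos_divide_le_eq)
      then show ?thesis using va by (simp add: algebra_simps)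
    next
      case True
      then have gi0: "\<forall>i\<in>I. 0 \<le> v \<bullet> c i" using gi by simp
      have av: "v \<bullet> a < 0" using va True by simp
      define k where "k = (\<beta> - a \<bullet> w1 + 1) / (- (v \<bullet> a))"
      define w where "w = w1 - k *\<^sub>R v"
      have kk: "k * (v \<bullet> a) = - (\<beta> - a \<bullet> w1 + 1)" unfolding k_def using av by simp
      have k0: "0 \<le> k"
      proof -
        have "a \<bullet> w1 \<le> \<beta>" using le w1 by blast
        then show ?thesis unfolding k_def using av by (simp add: divide_nonneg_neg)
      qed
      have "\<forall>i\<in>I. c i \<bullet> w \<le> e i"
      proof
        fix i assume i: "i \<in> I"
        have "0 \<le> k * (v \<bullet> c i)" using k0 gi0 i by simp
        moreover have "c i \<bullet> w1 \<le> e i" using w1 i by blast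
        ultimately show "c i \<bullet> w \<le> e i" unfolding w_def
          by (simp add: inner_diff_right inner_commute)
      qed
      then have "a \<bullet> w \<le> \<beta>" by (rule le)
      moreover have "a \<bullet> w = a \<bullet> w1 + (\<beta> - a \<bullet> w1 + 1)"
        unfolding w_def using kk by (simp add: inner_diff_right inner_commute)
      ultimately show ?thesis by simp
    qed
  qed
qed

definition cvxe :: "('a::real_vector \<Rightarrow> ereal) \<Rightarrow> bool" where
  "cvxe \<phi> \<longleftrightarrow> (\<forall>x y \<theta>. \<phi> x < \<infinity> \<longrightarrow> \<phi> y < \<infinity> \<longrightarrow> 0 \<le> \<theta> \<longrightarrow> \<theta> \<le> 1 \<longrightarrow>
      \<phi> ((1-\<theta>) *\<^sub>R x + \<theta> *\<^sub>R y) \<le> ereal ((1-\<theta>) * real_of_ereal (\<phi> x) + \<theta> * real_of_ereal (\<phi> y)))"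

lemma sep_thm:
  fixes \<phi> :: "'a::euclidean_space \<Rightarrow> ereal"
  assumes cv: "cvxe \<phi>" and nm: "\<And>w. \<phi> w \<noteq> -\<infinity>"
    and w0: "w0 \<in> rel_interior (edom \<phi>)" and Q: "convex Q" "w0 \<in> Q"
    and pQ: "\<And>w. w \<in> Q \<Longrightarrow> ereal p \<le> \<phi> w"
  shows "\<exists>a \<beta>. (\<forall>w\<in>Q \<inter> affine hull (edom \<phi>). a \<bullet> w \<le> \<beta>) \<and> (\<forall>w. ereal p \<le> \<phi> w + ereal (a \<bullet> w - \<beta>))"
proof -
  define D where "D = edom \<phi>"
  have w0D: "w0 \<in> D" using w0 rel_interior_subset unfolding D_def by blast
  define L where "L = span ((\<lambda>x. -w0 + x) ` D)"
  have affD: "affine hull D = (\<lambda>x. w0 + x) ` L"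
    unfolding L_def by (rule affine_hull_span_gen) (rule hull_inc[OF w0D])
  define N where "N = {n. \<forall>l\<in>L. n \<bullet> l = 0}"
  define C1 where "C1 = {(w + n, t) | w n t. \<phi> w \<le> ereal t \<and> n \<in> N}"
  define C2 where "C2 = {(w, t) | w t. w \<in> Q \<and> w \<in> affine hull D \<and> t < p}"
  have fin: "\<phi> w = ereal (real_of_ereal (\<phi> w))" if "\<phi> w \<le> ereal t" for w t
    using nm[of w] that by (cases "\<phi> w") auto
  have finD: "\<phi> w = ereal (real_of_ereal (\<phi> w))" if "w \<in> D" for w
    using nm[of w] that unfolding D_def edom_def by (cases "\<phi> w") auto
  have convC1: "convex C1"
    unfolding convex_def
  proof (intro ballI allI impI)
    fix x y and u v :: real
    assume x: "x \<in> C1" and y: "y \<in> C1" and uv: "0 \<le> u" "0 \<le> v" "u + v = 1"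
    from x obtain w1 n1 t1 where x1: "x = (w1 + n1, t1)" "\<phi> w1 \<le> ereal t1" "n1 \<in> N" unfolding C1_def by blast
    from y obtain w2 n2 t2 where y1: "y = (w2 + n2, t2)" "\<phi> w2 \<le> ereal t2" "n2 \<in> N" unfolding C1_def by blast
    have u1: "u = 1 - v" using uv by simp
    have lt: "\<phi> w1 < \<infinity>" "\<phi> w2 < \<infinity>" using x1 y1 by (auto simp: less_le_trans)
    have r1: "real_of_ereal (\<phi> w1) \<le> t1" using fin[OF x1(2)] x1(2) by (metis ereal_less_eq(3))
    have r2: "real_of_ereal (\<phi> w2) \<le> t2" using fin[OF y1(2)] y1(2) by (metis ereal_less_eq(3))
    have c: "\<phi> ((1-v) *\<^sub>R w1 + v *\<^sub>R w2) \<le> ereal ((1-v) * real_of_ereal (\<phi> w1) + v * real_of_ereal (\<phi> w2))"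
      by (rule cv[unfolded cvxe_def, rule_format]) (use lt uv in auto)
    have "\<phi> (u *\<^sub>R w1 + v *\<^sub>R w2) \<le> ereal (u * real_of_ereal (\<phi> w1) + v * real_of_ereal (\<phi> w2))"
      using c unfolding u1 .
    also have "\<dots> \<le> ereal (u * t1 + v * t2)"
      using r1 r2 uv by (simp add: add_mono mult_left_mono)
    finally have e: "\<phi> (u *\<^sub>R w1 + v *\<^sub>R w2) \<le> ereal (u * t1 + v * t2)" .
    have nN: "u *\<^sub>R n1 + v *\<^sub>R n2 \<in> N" using x1(3) y1(3) unfolding N_def
      by (auto simp: inner_add_left)
    have "u *\<^sub>R x + v *\<^sub>R y = ((u *\<^sub>R w1 + v *\<^sub>R w2) + (u *\<^sub>R n1 + v *\<^sub>R n2), u * t1 + v * t2)"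
      using x1 y1 by (simp add: algebra_simps)
    then show "u *\<^sub>R x + v *\<^sub>R y \<in> C1" unfolding C1_def using e nN by blast
  qed
  have convC2: "convex C2"
    unfolding convex_def
  proof (intro ballI allI impI)
    fix x y and u v :: real
    assume x: "x \<in> C2" and y: "y \<in> C2" and uv: "0 \<le> u" "0 \<le> v" "u + v = 1"
    from x obtain w1 t1 where x1: "x = (w1, t1)" "w1 \<in> Q" "w1 \<in> affine hull D" "t1 < p" unfolding C2_def by blast
    from y obtain w2 t2 where y1: "y = (w2, t2)" "w2 \<in> Q" "w2 \<in> affine hull D" "t2 < p" unfolding C2_def by blast
    have "u *\<^sub>R w1 + v *\<^sub>R w2 \<in> Q" using Q(1) x1 y1 uv unfolding convex_def by blast
    moreover have "u *\<^sub>R w1 + v *\<^sub>R w2 \<in> affine hull D"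
      using convex_affine_hull[of D] x1 y1 uv unfolding convex_def by blast
    moreover have "u * t1 + v * t2 < p"
    proof -
      have "u * t1 \<le> u * p" "v * t2 \<le> v * p" using uv x1 y1 by (auto intro: mult_left_mono)
      moreover have "u * t1 < u * p \<or> v * t2 < v * p"
      proof (cases "u = 0")
        case True then show ?thesis using uv y1 by simp
      next
        case False then show ?thesis using uv x1 by simp
      qed
      ultimately have "u * t1 + v * t2 < u * p + v * p" by linarith
      also have "\<dots> = p" using uv by (simp add: distrib_right[symmetric])
      finally show ?thesis .
    qed
    ultimately show "u *\<^sub>R x + v *\<^sub>R y \<in> C2" unfolding C2_def using x1 y1 by auto
  qed
  have 0: "0 \<in> N" unfolding N_def by simp
  define r0 where "r0 = real_of_ereal (\<phi> w0)"
  have r0: "\<phi> w0 = ereal r0" using finD[OF w0D] unfolding r0_def .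
  have C1ne: "(w0, r0) \<in> C1"
  proof -
    have e1: "(w0, r0) = (w0 + 0, r0)" by simp
    have e2: "\<phi> w0 \<le> ereal r0" using r0 by simp
    show ?thesis unfolding C1_def using e1 e2 0 by blast
  qed
  have w0aff: "w0 \<in> affine hull D" by (rule hull_inc[OF w0D])
  have C2ne: "(w0, t) \<in> C2" if "t < p" for t
    unfolding C2_def using Q(2) w0aff that by blast
  have inL: "-w0 + w \<in> L" if "w \<in> D" for w unfolding L_def using that by (intro span_base imageI)
  have disj: "C1 \<inter> C2 = {}"
  proof (rule ccontr)
    assume "C1 \<inter> C2 \<noteq> {}"
    then obtain x where x: "x \<in> C1" "x \<in> C2" by blast
    from x(1) obtain w n t where 1: "x = (w + n, t)" "\<phi> w \<le> ereal t" "n \<in> N" unfolding C1_def by blast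
    from x(2) obtain w' t' where 2: "x = (w', t')" "w' \<in> Q" "w' \<in> affine hull D" "t' < p" unfolding C2_def by blast
    have 3: "w' = w + n" "t' = t" using 1(1) 2(1) by auto
    have 1: "\<phi> w \<le> ereal t" "n \<in> N" using 1 by auto
    have 2: "w + n \<in> Q" "w + n \<in> affine hull D" "t < p" using 2 3 by auto
    from 2(2) obtain l' where l': "l' \<in> L" "w + n = w0 + l'" unfolding affD by auto
    have "\<phi> w < \<infinity>" by (rule order.strict_trans1[OF 1(1)]) simp
    then have wD: "w \<in> D" unfolding D_def edom_def by simp
    have "n = (w + n) - w" by simp
    also have "\<dots> = (w0 + l') - w" using l'(2) by simp
    also have "\<dots> = l' - (-w0 + w)" by (simp add: algebra_simps)
    finally have nl: "n = l' - (-w0 + w)" .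
    have "l' - (-w0 + w) \<in> L" unfolding L_def by (rule span_diff) (use l'(1) inL[OF wD] in \<open>simp_all add: L_def\<close>)
    then have "n \<in> L" using nl by simp
    then have "n \<bullet> n = 0" using 1(2) unfolding N_def by blast
    then have "n = 0" by simp
    then have "w \<in> Q" using 2 by simp
    then have "ereal p \<le> \<phi> w" by (rule pQ)
    then have "ereal p \<le> ereal t" using 1(1) by (rule order_trans)
    then show False using 2(3) by simp
  qed
  obtain a' b where a'0: "a' \<noteq> 0" and s1: "\<forall>x\<in>C1. a' \<bullet> x \<le> b" and s2: "\<forall>x\<in>C2. b \<le> a' \<bullet> x"
  proof -
    have ne1: "C1 \<noteq> {}" using C1ne by auto
    have ne2: "C2 \<noteq> {}" using C2ne[of "p - 1"] by auto
    show ?thesis using separating_hyperplane_sets[OF convC1 convC2 ne1 ne2 disj] that by blast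
  qed
  obtain a \<alpha> where a': "a' = (a, \<alpha>)" by (cases a')
  have s1': "a \<bullet> (w + n) + \<alpha> * t \<le> b" if "\<phi> w \<le> ereal t" "n \<in> N" for w n t
  proof -
    have "(w + n, t) \<in> C1" unfolding C1_def using that by blast
    then show ?thesis using s1 unfolding a' by fastforce
  qed
  have s2': "b \<le> a \<bullet> w + \<alpha> * t" if "w \<in> Q" "w \<in> affine hull D" "t < p" for w t
  proof -
    have "(w, t) \<in> C2" unfolding C2_def using that by blast
    then show ?thesis using s2 unfolding a' by fastforce
  qed
  have al: "\<alpha> \<le> 0"
  proof (rule ccontr)
    assume "\<not> \<alpha> \<le> 0"
    then have ap: "0 < \<alpha>" by simp
    define t where "t = r0 + (\<bar>b - a \<bullet> w0 - \<alpha> * r0\<bar> + 1) / \<alpha>"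
    have "(\<bar>b - a \<bullet> w0 - \<alpha> * r0\<bar> + 1) / \<alpha> \<ge> 0" using ap by simp
    then have "\<phi> w0 \<le> ereal t" unfolding r0 t_def by simp
    from s1'[OF this 0] have "a \<bullet> w0 + \<alpha> * t \<le> b" by simp
    moreover have "\<alpha> * t = \<alpha> * r0 + (\<bar>b - a \<bullet> w0 - \<alpha> * r0\<bar> + 1)"
      unfolding t_def using ap by (simp add: distrib_left field_simps)
    ultimately show False by linarith
  qed
  have an: "\<alpha> \<noteq> 0"
  proof
    assume a0: "\<alpha> = 0"
    then have "a \<noteq> 0" using a'0 a' by (auto simp: zero_prod_def)
    then have na: "0 < norm a" by simp
    have bw0: "b \<le> a \<bullet> w0" using s2'[OF Q(2) w0aff, of "p - 1"] a0 by simp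
    obtain \<epsilon> where ep: "\<epsilon> > 0" "ball w0 \<epsilon> \<inter> affine hull D \<subseteq> D"
      using w0 unfolding D_def mem_rel_interior_ball by blast
    define \<delta> where "\<delta> = \<epsilon> / (2 * norm a)"
    have dp: "0 < \<delta>" unfolding \<delta>_def using ep na by simp
    obtain y z where yz: "y \<in> L" "\<And>w. w \<in> L \<Longrightarrow> orthogonal z w" "\<delta> *\<^sub>R a = y + z"
      using orthogonal_subspace_decomp_exists[of "(\<lambda>x. -w0 + x) ` D" "\<delta> *\<^sub>R a"] unfolding L_def by metis
    have zN: "z \<in> N" unfolding N_def using yz(2) by (auto simp: orthogonal_def)
    have "orthogonal y z" using yz(2)[OF yz(1)] by (simp add: orthogonal_commute)
    then have "(norm (y + z))\<^sup>2 = (norm y)\<^sup>2 + (norm z)\<^sup>2" by (rule norm_add_Pythagorean)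
    then have "(norm y)\<^sup>2 \<le> (norm (y + z))\<^sup>2" by simp
    then have "norm y \<le> norm (y + z)" by (rule power2_le_imp_le) simp
    also have "norm (y + z) = \<delta> * norm a" using yz(3)[symmetric] dp by simp
    also have "\<dots> = \<epsilon> / 2" unfolding \<delta>_def using na by simp
    finally have "norm y < \<epsilon>" using ep by simp
    then have "w0 + y \<in> ball w0 \<epsilon>" by (simp add: dist_norm)
    moreover have "w0 + y \<in> affine hull D" unfolding affD using yz(1) by auto
    ultimately have yD: "w0 + y \<in> D" using ep by blast
    have "\<phi> (w0 + y) \<le> ereal (real_of_ereal (\<phi> (w0 + y)))" using finD[OF yD] by (metis order.refl)
    from s1'[OF this zN] a0 have "a \<bullet> (w0 + y + z) \<le> b" by (simp add: add.assoc)
    moreover have "a \<bullet> (y + z) = \<delta> * (a \<bullet> a)" using yz(3)[symmetric] by simp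
    moreover have "0 < \<delta> * (a \<bullet> a)" using dp \<open>a \<noteq> 0\<close> by simp
    ultimately show False using bw0 by (simp add: inner_add_right)
  qed
  have aln: "\<alpha> < 0" using al an by simp
  have hB: "b \<le> a \<bullet> w + \<alpha> * p" if "w \<in> Q" "w \<in> affine hull D" for w
  proof (rule ccontr)
    assume "\<not> b \<le> a \<bullet> w + \<alpha> * p"
    then have dpos: "0 < b - a \<bullet> w - \<alpha> * p" by simp
    define t where "t = p + (b - a \<bullet> w - \<alpha> * p) / (2 * \<alpha>)"
    have "(b - a \<bullet> w - \<alpha> * p) / (2 * \<alpha>) < 0" using dpos aln by (simp add: divide_pos_neg)
    then have "t < p" unfolding t_def by simp
    from s2'[OF that this] have "b \<le> a \<bullet> w + \<alpha> * t" .
    moreover have "2 * (\<alpha> * t) = 2 * (\<alpha> * p) + (b - a \<bullet> w - \<alpha> * p)"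
      unfolding t_def using aln by (simp add: distrib_left field_simps)
    ultimately show False using dpos by linarith
  qed
  define a2 where "a2 = (1 / \<alpha>) *\<^sub>R a"
  define \<beta> where "\<beta> = b / \<alpha> - p"
  show ?thesis
  proof (intro exI[of _ a2] exI[of _ \<beta>] conjI ballI allI)
    fix w assume "w \<in> Q \<inter> affine hull (edom \<phi>)"
    then have "b \<le> a \<bullet> w + \<alpha> * p" using hB unfolding D_def by blast
    moreover have "\<beta> - a2 \<bullet> w = (b - \<alpha> * p - a \<bullet> w) / \<alpha>"
      unfolding \<beta>_def a2_def using aln by (simp add: field_simps)
    moreover have "(b - \<alpha> * p - a \<bullet> w) / \<alpha> \<ge> 0" if "b - \<alpha> * p - a \<bullet> w \<le> 0"
      using that aln by (simp add: divide_nonpos_neg)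
    ultimately show "a2 \<bullet> w \<le> \<beta>" by fastforce
  next
    fix w
    show "ereal p \<le> \<phi> w + ereal (a2 \<bullet> w - \<beta>)"
    proof (cases "w \<in> D")
      case False
      then have "\<phi> w = \<infinity>" unfolding D_def edom_def by auto
      then show ?thesis by simp
    next
      case True
      define r where "r = real_of_ereal (\<phi> w)"
      have r: "\<phi> w = ereal r" using finD[OF True] unfolding r_def .
      have "a \<bullet> w + \<alpha> * r \<le> b" using s1'[of w r 0] 0 r by simp
      moreover have "r + (a2 \<bullet> w - \<beta>) - p = (a \<bullet> w + \<alpha> * r - b) / \<alpha>"
        unfolding \<beta>_def a2_def using aln by (simp add: field_simps)
      moreover have "(a \<bullet> w + \<alpha> * r - b) / \<alpha> \<ge> 0" if "a \<bullet> w + \<alpha> * r - b \<le> 0"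
        using that aln by (simp add: divide_nonpos_neg)
      ultimately have "p \<le> r + (a2 \<bullet> w - \<beta>)" by fastforce
      then show ?thesis unfolding r by simp
    qed
  qed
qed

lemma mult_thm:
  fixes \<phi> :: "'a::euclidean_space \<Rightarrow> ereal" and c :: "'i \<Rightarrow> 'a" and e :: "'i \<Rightarrow> real"
  assumes cv: "cvxe \<phi>" and nm: "\<And>w. \<phi> w \<noteq> -\<infinity>"
    and w0: "w0 \<in> rel_interior (edom \<phi>)" and fin: "finite I"
    and w0I: "\<forall>i\<in>I. c i \<bullet> w0 \<le> e i"
    and pP: "\<And>w. (\<forall>i\<in>I. c i \<bullet> w \<le> e i) \<Longrightarrow> ereal p \<le> \<phi> w"
  shows "\<exists>l. (\<forall>i\<in>I. 0 \<le> l i) \<and> (\<forall>w. ereal p \<le> \<phi> w + ereal (\<Sum>i\<in>I. l i * (c i \<bullet> w - e i)))"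
proof -
  define Q where "Q = {w. \<forall>i\<in>I. c i \<bullet> w \<le> e i}"
  have cQ: "convex Q" unfolding Q_def convex_def
  proof (intro CollectI ballI allI impI)
    fix x y i and u v :: real
    assume x: "x \<in> {w. \<forall>i\<in>I. c i \<bullet> w \<le> e i}" and y: "y \<in> {w. \<forall>i\<in>I. c i \<bullet> w \<le> e i}"
      and uv: "0 \<le> u" "0 \<le> v" "u + v = 1" and i: "i \<in> I"
    have "u * (c i \<bullet> x) \<le> u * e i" "v * (c i \<bullet> y) \<le> v * e i"
      using x y i uv by (auto intro: mult_left_mono)
    then have "u * (c i \<bullet> x) + v * (c i \<bullet> y) \<le> (u + v) * e i" by (simp add: distrib_right)
    then show "c i \<bullet> (u *\<^sub>R x + v *\<^sub>R y) \<le> e i" using uv by (simp add: inner_add_right)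
  qed
  have w0Q: "w0 \<in> Q" unfolding Q_def using w0I by simp
  obtain a \<beta> where ab1: "\<forall>w\<in>Q \<inter> affine hull (edom \<phi>). a \<bullet> w \<le> \<beta>"
    and ab2: "\<forall>w. ereal p \<le> \<phi> w + ereal (a \<bullet> w - \<beta>)"
    using sep_thm[OF cv nm w0 cQ w0Q] pP unfolding Q_def by blast
  obtain F where F: "finite F" "affine hull (edom \<phi>) = \<Inter> F"
    "\<forall>h\<in>F. \<exists>a b. a \<noteq> 0 \<and> h = {x. a \<bullet> x \<le> b}"
    using polyhedron_affine_hull[of "edom \<phi>"] unfolding polyhedron_def by blast
  obtain ha hb where hab: "\<And>h. h \<in> F \<Longrightarrow> h = {x. ha h \<bullet> x \<le> hb h}"
    using F(3) by metis
  define c' where "c' = case_sum c ha"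
  define e' where "e' = case_sum e hb"
  define J where "J = I <+> F"
  have finJ: "finite J" unfolding J_def using fin F(1) by simp
  have w0D: "w0 \<in> edom \<phi>" using w0 rel_interior_subset by blast
  have w0aff: "w0 \<in> affine hull (edom \<phi>)" by (rule hull_inc[OF w0D])
  have affF: "w \<in> affine hull (edom \<phi>) \<longleftrightarrow> (\<forall>h\<in>F. ha h \<bullet> w \<le> hb h)" for w
  proof -
    have "w \<in> \<Inter> F \<longleftrightarrow> (\<forall>h\<in>F. w \<in> h)" by blast
    also have "\<dots> \<longleftrightarrow> (\<forall>h\<in>F. ha h \<bullet> w \<le> hb h)"
    proof (intro ball_cong refl)
      fix h assume "h \<in> F"
      then show "w \<in> h \<longleftrightarrow> ha h \<bullet> w \<le> hb h" using hab[of h] by blast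
    qed
    finally show ?thesis using F(2) by simp
  qed
  have Jiff: "(\<forall>j\<in>J. c' j \<bullet> w \<le> e' j) \<longleftrightarrow> (\<forall>i\<in>I. c i \<bullet> w \<le> e i) \<and> (\<forall>h\<in>F. ha h \<bullet> w \<le> hb h)" for w
  proof
    assume H: "\<forall>j\<in>J. c' j \<bullet> w \<le> e' j"
    have "c' (Inl i) \<bullet> w \<le> e' (Inl i)" if "i \<in> I" for i using H that unfolding J_def by blast
    moreover have "c' (Inr h) \<bullet> w \<le> e' (Inr h)" if "h \<in> F" for h using H that unfolding J_def by blast
    ultimately show "(\<forall>i\<in>I. c i \<bullet> w \<le> e i) \<and> (\<forall>h\<in>F. ha h \<bullet> w \<le> hb h)"
      unfolding c'_def e'_def by simp
  next
    assume "(\<forall>i\<in>I. c i \<bullet> w \<le> e i) \<and> (\<forall>h\<in>F. ha h \<bullet> w \<le> hb h)"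
    then show "\<forall>j\<in>J. c' j \<bullet> w \<le> e' j" unfolding J_def c'_def e'_def by auto
  qed
  have w1: "\<forall>j\<in>J. c' j \<bullet> w0 \<le> e' j" using Jiff w0I affF w0aff by blast
  have le: "a \<bullet> w \<le> \<beta>" if "\<forall>j\<in>J. c' j \<bullet> w \<le> e' j" for w
  proof -
    have "w \<in> Q" "w \<in> affine hull (edom \<phi>)" using that Jiff affF unfolding Q_def by auto
    then show ?thesis using ab1 by blast
  qed
  obtain l where l: "\<forall>j\<in>J. 0 \<le> l j" "a = (\<Sum>j\<in>J. l j *\<^sub>R c' j)" "(\<Sum>j\<in>J. l j * e' j) \<le> \<beta>"
    using farkas[OF finJ w1 le] by blast
  show ?thesis
  proof (intro exI[of _ "\<lambda>i. l (Inl i)"] conjI ballI allI)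
    fix i assume "i \<in> I" then show "0 \<le> l (Inl i)" using l(1) unfolding J_def by auto
  next
    fix w
    show "ereal p \<le> \<phi> w + ereal (\<Sum>i\<in>I. l (Inl i) * (c i \<bullet> w - e i))"
    proof (cases "w \<in> edom \<phi>")
      case False
      then have "\<phi> w = \<infinity>" unfolding edom_def by auto
      then show ?thesis by simp
    next
      case True
      then have "w \<in> affine hull (edom \<phi>)" by (rule hull_inc)
      then have hw: "\<forall>h\<in>F. ha h \<bullet> w \<le> hb h" using affF by blast
      have "a \<bullet> w - \<beta> \<le> (\<Sum>j\<in>J. l j * (c' j \<bullet> w)) - (\<Sum>j\<in>J. l j * e' j)"
        using l(3) unfolding l(2) by (simp add: inner_sum_left)
      also have "\<dots> = (\<Sum>j\<in>J. l j * (c' j \<bullet> w - e' j))"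
        by (simp add: sum_subtractf right_diff_distrib)
      also have "\<dots> = (\<Sum>i\<in>I. l (Inl i) * (c i \<bullet> w - e i)) + (\<Sum>h\<in>F. l (Inr h) * (ha h \<bullet> w - hb h))"
        unfolding J_def c'_def e'_def using fin F(1) by (simp add: sum.Plus)
      also have "(\<Sum>h\<in>F. l (Inr h) * (ha h \<bullet> w - hb h)) \<le> 0"
      proof (rule sum_nonpos)
        fix h assume h: "h \<in> F"
        have "0 \<le> l (Inr h)" using l(1) h unfolding J_def by auto
        moreover have "ha h \<bullet> w - hb h \<le> 0" using hw h by auto
        ultimately show "l (Inr h) * (ha h \<bullet> w - hb h) \<le> 0" by (simp add: mult_nonneg_nonpos)
      qed
      finally have "a \<bullet> w - \<beta> \<le> (\<Sum>i\<in>I. l (Inl i) * (c i \<bullet> w - e i))" by simp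
      then have "\<phi> w + ereal (a \<bullet> w - \<beta>) \<le> \<phi> w + ereal (\<Sum>i\<in>I. l (Inl i) * (c i \<bullet> w - e i))"
        by (intro add_mono order_refl) simp
      then show ?thesis using ab2 order_trans by blast
    qed
  qed
qed

lemma ball_Plus: "(\<forall>i\<in>A <+> B. P i) \<longleftrightarrow> (\<forall>a\<in>A. P (Inl a)) \<and> (\<forall>b\<in>B. P (Inr b))"
  by (auto simp: Plus_def)

lemma cvxe_comp:
  assumes "cvxe h" and L: "\<And>x y \<theta>. L ((1-\<theta>) *\<^sub>R x + \<theta> *\<^sub>R y) = (1-\<theta>) *\<^sub>R L x + \<theta> *\<^sub>R L y"
  shows "cvxe (\<lambda>w. h (L w))"
  using assms(1) unfolding cvxe_def L by blast

lemma cvxe_add: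
  assumes h1: "cvxe h1" and h2: "cvxe h2" and n1: "\<And>x. h1 x \<noteq> -\<infinity>" and n2: "\<And>x. h2 x \<noteq> -\<infinity>"
  shows "cvxe (\<lambda>x. h1 x + h2 x)"
  unfolding cvxe_def
proof (intro allI impI)
  fix x y and \<theta> :: real
  assume x: "h1 x + h2 x < \<infinity>" and y: "h1 y + h2 y < \<infinity>" and t: "0 \<le> \<theta>" "\<theta> \<le> 1"
  obtain a1 a2 b1 b2 where e: "h1 x = ereal a1" "h2 x = ereal a2" "h1 y = ereal b1" "h2 y = ereal b2"
    using x y n1[of x] n2[of x] n1[of y] n2[of y]
    by (cases "h1 x"; cases "h2 x"; cases "h1 y"; cases "h2 y") auto
  have "h1 ((1-\<theta>) *\<^sub>R x + \<theta> *\<^sub>R y) \<le> ereal ((1-\<theta>) * a1 + \<theta> * b1)"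
    using h1[unfolded cvxe_def, rule_format, of x y \<theta>] e t by simp
  moreover have "h2 ((1-\<theta>) *\<^sub>R x + \<theta> *\<^sub>R y) \<le> ereal ((1-\<theta>) * a2 + \<theta> * b2)"
    using h2[unfolded cvxe_def, rule_format, of x y \<theta>] e t by simp
  ultimately have "h1 ((1-\<theta>) *\<^sub>R x + \<theta> *\<^sub>R y) + h2 ((1-\<theta>) *\<^sub>R x + \<theta> *\<^sub>R y)
      \<le> ereal ((1-\<theta>) * a1 + \<theta> * b1) + ereal ((1-\<theta>) * a2 + \<theta> * b2)" by (rule add_mono)
  also have "\<dots> = ereal ((1-\<theta>) * real_of_ereal (h1 x + h2 x) + \<theta> * real_of_ereal (h1 y + h2 y))"
    using e by (simp add: algebra_simps)
  finally show "h1 ((1-\<theta>) *\<^sub>R x + \<theta> *\<^sub>R y) + h2 ((1-\<theta>) *\<^sub>R x + \<theta> *\<^sub>R y)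
      \<le> ereal ((1-\<theta>) * real_of_ereal (h1 x + h2 x) + \<theta> * real_of_ereal (h1 y + h2 y))" .
qed

lemma cvxe_of_convex_fun:
  assumes cf: "convex_fun f" and nm: "\<And>x. f x \<noteq> -\<infinity>"
  shows "cvxe f"
  unfolding cvxe_def
proof (intro allI impI)
  fix x y and \<theta> :: real
  assume x: "f x < \<infinity>" and y: "f y < \<infinity>" and t: "0 \<le> \<theta>" "\<theta> \<le> 1"
  obtain a b where e: "f x = ereal a" "f y = ereal b"
    using x y nm[of x] nm[of y] by (cases "f x"; cases "f y") auto
  have "(x, a) \<in> epigraph_e f" "(y, b) \<in> epigraph_e f" using e unfolding epigraph_e_def by auto
  then have "(1-\<theta>) *\<^sub>R (x, a) + \<theta> *\<^sub>R (y, b) \<in> epigraph_e f"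
    using cf t unfolding convex_fun_def by (intro convexD) auto
  then show "f ((1-\<theta>) *\<^sub>R x + \<theta> *\<^sub>R y) \<le> ereal ((1-\<theta>) * real_of_ereal (f x) + \<theta> * real_of_ereal (f y))"
    using e unfolding epigraph_e_def by simp
qed

lemma cvxe_edom_convex:
  assumes "cvxe f" shows "convex (edom f)"
  unfolding convex_alt edom_def
proof (intro ballI allI impI CollectI)
  fix x y and u :: real
  assume "x \<in> {x. f x < \<infinity>}" "y \<in> {x. f x < \<infinity>}" "0 \<le> u \<and> u \<le> 1"
  then have "f ((1 - u) *\<^sub>R x + u *\<^sub>R y) \<le> ereal ((1-u) * real_of_ereal (f x) + u * real_of_ereal (f y))"
    using assms unfolding cvxe_def by auto
  then show "f ((1 - u) *\<^sub>R x + u *\<^sub>R y) < \<infinity>" by (rule order.strict_trans1) simp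
qed

lemma poly_halfspaces:
  fixes E :: "'a::euclidean_space set"
  assumes "polyhedron E"
  shows "\<exists>H ha hb. finite H \<and> E = \<Inter> H \<and> (\<forall>k\<in>H. k = {v. ha k \<bullet> v \<le> hb k})"
proof -
  obtain F where F: "finite F" "E = \<Inter> F" "\<forall>h\<in>F. \<exists>a b. a \<noteq> 0 \<and> h = {x. a \<bullet> x \<le> b}"
    using assms unfolding polyhedron_def by blast
  obtain ha hb where "\<And>h. h \<in> F \<Longrightarrow> h = {x. ha h \<bullet> x \<le> hb h}" using F(3) by metis
  then show ?thesis using F by blast
qed

lemma part_lemma:
  fixes h :: "'a::euclidean_space \<Rightarrow> ereal"
  assumes pr: "proper_fun h" and cf: "convex_fun h"
    and x0: "x0 \<in> (if polyhedral_fun h then edom h else rel_interior (edom h))"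
    and Hp_def: "Hp = (\<lambda>v::'a \<times> real. if polyhedral_fun h then ereal (snd v) else h (fst v))"
  shows "\<exists>(H::('a \<times> real) set set) ha hb. finite H \<and> (\<forall>v. Hp v \<noteq> -\<infinity>) \<and> cvxe Hp \<and>
     (\<forall>v. (\<forall>k\<in>H. ha k \<bullet> v \<le> hb k) \<longrightarrow> h (fst v) \<le> Hp v) \<and>
     (\<forall>x r. h x = ereal r \<longrightarrow> Hp (x, r) = ereal r \<and> (\<forall>k\<in>H. ha k \<bullet> (x, r) \<le> hb k)) \<and>
     (x0, real_of_ereal (h x0)) \<in> rel_interior (edom Hp) \<and> convex (edom Hp) \<and>
     h x0 = ereal (real_of_ereal (h x0))"
proof -
  have nm: "\<And>x. h x \<noteq> -\<infinity>" using pr unfolding proper_fun_def by auto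
  have cvh: "cvxe h" by (rule cvxe_of_convex_fun[OF cf nm])
  have x0d: "x0 \<in> edom h" using x0 rel_interior_subset by (auto split: if_splits)
  have x0f: "h x0 = ereal (real_of_ereal (h x0))"
    using x0d nm[of x0] unfolding edom_def by (cases "h x0") auto
  show ?thesis
  proof (cases "polyhedral_fun h")
    case True
    have Hp: "Hp = (\<lambda>v. ereal (snd v))" unfolding Hp_def using True by simp
    obtain H ha hb where H: "finite H" "epigraph_e h = \<Inter> H" "\<forall>k\<in>H. k = {v. ha k \<bullet> v \<le> hb k}"
      using poly_halfspaces[of "epigraph_e h"] True unfolding polyhedral_fun_def by blast
    have inH: "(\<forall>k\<in>H. ha k \<bullet> v \<le> hb k) \<longleftrightarrow> v \<in> epigraph_e h" for v
    proof -
      have "(\<forall>k\<in>H. ha k \<bullet> v \<le> hb k) \<longleftrightarrow> (\<forall>k\<in>H. v \<in> k)"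
      proof (intro ball_cong refl)
        fix k assume "k \<in> H" then show "ha k \<bullet> v \<le> hb k \<longleftrightarrow> v \<in> k" using H(3) by blast
      qed
      then show ?thesis using H(2) by blast
    qed
    have cvx: "cvxe Hp" unfolding Hp cvxe_def by simp
    have ed: "edom Hp = UNIV" unfolding Hp edom_def by simp
    show ?thesis
    proof (intro exI[of _ H] exI[of _ ha] exI[of _ hb] conjI allI impI)
      show "finite H" by (rule H(1))
      show "cvxe Hp" by (rule cvx)
      show "convex (edom Hp)" unfolding ed by simp
      show "(x0, real_of_ereal (h x0)) \<in> rel_interior (edom Hp)" unfolding ed by simp
      show "h x0 = ereal (real_of_ereal (h x0))" by (rule x0f)
    next
      fix v show "Hp v \<noteq> -\<infinity>" unfolding Hp by simp
    next
      fix v assume "\<forall>k\<in>H. ha k \<bullet> v \<le> hb k"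
      then have "v \<in> epigraph_e h" using inH by blast
      then show "h (fst v) \<le> Hp v" unfolding Hp epigraph_e_def by (cases v) auto
    next
      fix x r assume "h x = ereal r"
      then show "Hp (x, r) = ereal r" unfolding Hp by simp
    next
      fix x r assume "h x = ereal r"
      then have "(x, r) \<in> epigraph_e h" unfolding epigraph_e_def by simp
      then show "\<forall>k\<in>H. ha k \<bullet> (x, r) \<le> hb k" using inH by blast
    qed
  next
    case False
    have Hp: "Hp = (\<lambda>v. h (fst v))" unfolding Hp_def using False by simp
    have x0r: "x0 \<in> rel_interior (edom h)" using x0 False by simp
    have cvx: "cvxe Hp" unfolding Hp by (rule cvxe_comp[OF cvh]) simp
    have ed: "edom Hp = edom h \<times> UNIV" unfolding Hp edom_def by auto
    have ce: "convex (edom h)" by (rule cvxe_edom_convex[OF cvh])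
    have ri: "rel_interior (edom Hp) = rel_interior (edom h) \<times> UNIV"
      unfolding ed using rel_interior_Times[OF ce convex_UNIV] by simp
    define H0 :: "('a \<times> real) set set" where "H0 = {}"
    define ha0 :: "('a \<times> real) set \<Rightarrow> 'a \<times> real" where "ha0 = (\<lambda>k. 0)"
    define hb0 :: "('a \<times> real) set \<Rightarrow> real" where "hb0 = (\<lambda>k. 0)"
    show ?thesis
    proof (intro exI[of _ H0] exI[of _ ha0] exI[of _ hb0] conjI allI impI)
      show "cvxe Hp" by (rule cvx)
      show "convex (edom Hp)" unfolding ed using ce by (simp add: convex_Times)
      show "(x0, real_of_ereal (h x0)) \<in> rel_interior (edom Hp)" unfolding ri using x0r by simp
      show "h x0 = ereal (real_of_ereal (h x0))" by (rule x0f)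
    qed (auto simp: Hp nm H0_def)
  qed
qed

lemma mv_row: "(A *v x) $ j = A $ j \<bullet> x"
  by (simp add: matrix_vector_mult_def inner_vec_def)

lemma ereal_add_lt_top:
  fixes a b :: ereal
  assumes "a \<noteq> -\<infinity>" "b \<noteq> -\<infinity>"
  shows "a + b < \<infinity> \<longleftrightarrow> a < \<infinity> \<and> b < \<infinity>"
  using assms by (cases a; cases b) auto

lemma lemma_D:
  fixes f :: "real^'n \<Rightarrow> ereal" and g :: "real^'m \<Rightarrow> ereal"
    and A :: "real^'n^'m" and B :: "real^'n^'r" and b :: "real^'r"
  assumes f_proper: "proper_fun f" and f_conv: "convex_fun f"
    and g_proper: "proper_fun g" and g_conv: "convex_fun g"
    and x0f: "x0 \<in> (if polyhedral_fun f then edom f else rel_interior (edom f))"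
    and x0g: "A *v x0 \<in> (if polyhedral_fun g then edom g else rel_interior (edom g))"
    and x0B: "\<forall>i\<in>S. (B *v x0) $ i \<le> b $ i"
    and pS: "\<And>x. (\<forall>i\<in>S. (B *v x) $ i \<le> b $ i) \<Longrightarrow> ereal p \<le> f x + g (A *v x)"
  shows "\<exists>y z. (\<forall>i. 0 \<le> z $ i) \<and> (\<forall>i. i \<notin> S \<longrightarrow> z $ i = 0) \<and>
     (\<forall>x u. ereal p \<le> f x + g u + ereal (y \<bullet> (A *v x - u) + z \<bullet> (B *v x - b)))"
proof -
  have nmf: "\<And>x. f x \<noteq> -\<infinity>" using f_proper unfolding proper_fun_def by auto
  have nmg: "\<And>x. g x \<noteq> -\<infinity>" using g_proper unfolding proper_fun_def by auto
  define Fp where "Fp = (\<lambda>v::(real^'n) \<times> real. if polyhedral_fun f then ereal (snd v) else f (fst v))"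
  define Gp where "Gp = (\<lambda>v::(real^'m) \<times> real. if polyhedral_fun g then ereal (snd v) else g (fst v))"
  obtain Hf :: "((real^'n) \<times> real) set set" and haf hbf where PF: "finite Hf" "\<forall>v. Fp v \<noteq> -\<infinity>" "cvxe Fp"
     "\<forall>v. (\<forall>k\<in>Hf. haf k \<bullet> v \<le> hbf k) \<longrightarrow> f (fst v) \<le> Fp v"
     "\<forall>x r. f x = ereal r \<longrightarrow> Fp (x, r) = ereal r \<and> (\<forall>k\<in>Hf. haf k \<bullet> (x, r) \<le> hbf k)"
     "(x0, real_of_ereal (f x0)) \<in> rel_interior (edom Fp)" "convex (edom Fp)"
     "f x0 = ereal (real_of_ereal (f x0))"
    apply (insert part_lemma[OF f_proper f_conv x0f Fp_def])
    apply (elim exE conjE)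
    apply (rule that)
           apply assumption+
    done
  obtain Hg :: "((real^'m) \<times> real) set set" and hag hbg where PG: "finite Hg" "\<forall>v. Gp v \<noteq> -\<infinity>" "cvxe Gp"
     "\<forall>v. (\<forall>k\<in>Hg. hag k \<bullet> v \<le> hbg k) \<longrightarrow> g (fst v) \<le> Gp v"
     "\<forall>x r. g x = ereal r \<longrightarrow> Gp (x, r) = ereal r \<and> (\<forall>k\<in>Hg. hag k \<bullet> (x, r) \<le> hbg k)"
     "(A *v x0, real_of_ereal (g (A *v x0))) \<in> rel_interior (edom Gp)" "convex (edom Gp)"
     "g (A *v x0) = ereal (real_of_ereal (g (A *v x0)))"
    apply (insert part_lemma[OF g_proper g_conv x0g Gp_def])
    apply (elim exE conjE)
    apply (rule that)
           apply assumption+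
    done
  define \<phi> where "\<phi> = (\<lambda>w::((real^'n) \<times> real) \<times> ((real^'m) \<times> real). Fp (fst w) + Gp (snd w))"
  have nm: "\<phi> w \<noteq> -\<infinity>" for w
  proof -
    have "Fp (fst w) \<noteq> -\<infinity>" "Gp (snd w) \<noteq> -\<infinity>" using PF(2) PG(2) by blast+
    then show ?thesis unfolding \<phi>_def by simp
  qed
  have cvF: "cvxe (\<lambda>w::((real^'n) \<times> real) \<times> ((real^'m) \<times> real). Fp (fst w))"
    by (rule cvxe_comp[OF PF(3)]) simp
  have cvG: "cvxe (\<lambda>w::((real^'n) \<times> real) \<times> ((real^'m) \<times> real). Gp (snd w))"
    by (rule cvxe_comp[OF PG(3)]) simp
  have cv: "cvxe \<phi>" unfolding \<phi>_def by (rule cvxe_add[OF cvF cvG]) (use PF(2) PG(2) in auto)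
  have ed: "edom \<phi> = edom Fp \<times> edom Gp"
    unfolding \<phi>_def edom_def using PF(2) PG(2) by (auto simp: ereal_add_lt_top)
  define t0 where "t0 = real_of_ereal (f x0)"
  define s0 where "s0 = real_of_ereal (g (A *v x0))"
  define w0 where "w0 = ((x0, t0), (A *v x0, s0))"
  have w0ri: "w0 \<in> rel_interior (edom \<phi>)"
    unfolding ed rel_interior_Times[OF PF(7) PG(7)] w0_def t0_def s0_def using PF(6) PG(6) by simp
  define cA1 :: "'m \<Rightarrow> ((real^'n) \<times> real) \<times> ((real^'m) \<times> real)" where "cA1 = (\<lambda>j. ((A $ j, 0), (- axis j 1, 0)))"
  define cA2 :: "'m \<Rightarrow> ((real^'n) \<times> real) \<times> ((real^'m) \<times> real)" where "cA2 = (\<lambda>j. ((- (A $ j), 0), (axis j 1, 0)))"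
  define cB :: "'r \<Rightarrow> ((real^'n) \<times> real) \<times> ((real^'m) \<times> real)" where "cB = (\<lambda>i. ((B $ i, 0), (0, 0)))"
  define cF :: "((real^'n) \<times> real) set \<Rightarrow> ((real^'n) \<times> real) \<times> ((real^'m) \<times> real)" where "cF = (\<lambda>k. (haf k, (0, 0)))"
  define cG :: "((real^'m) \<times> real) set \<Rightarrow> ((real^'n) \<times> real) \<times> ((real^'m) \<times> real)" where "cG = (\<lambda>k. ((0, 0), hag k))"
  define c where "c = case_sum (case_sum cA1 cA2) (case_sum cB (case_sum cF cG))"
  define e where "e = case_sum (case_sum (\<lambda>j::'m. 0::real) (\<lambda>j::'m. 0::real)) (case_sum (\<lambda>i. b $ i) (case_sum hbf hbg))"
  define I where "I = ((UNIV :: 'm set) <+> (UNIV :: 'm set)) <+> (S <+> (Hf <+> Hg))"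
  have finI: "finite I" unfolding I_def using PF(1) PG(1) by simp
  have cI: "(\<forall>i\<in>I. c i \<bullet> ((x,t),(u,s)) \<le> e i) \<longleftrightarrow>
     (\<forall>j. (A *v x) $ j - u $ j \<le> 0) \<and> (\<forall>j. u $ j - (A *v x) $ j \<le> 0) \<and> (\<forall>i\<in>S. (B *v x) $ i \<le> b $ i) \<and>
     (\<forall>k\<in>Hf. haf k \<bullet> (x,t) \<le> hbf k) \<and> (\<forall>k\<in>Hg. hag k \<bullet> (u,s) \<le> hbg k)" for x t u s
    unfolding I_def ball_Plus c_def e_def cA1_def cA2_def cB_def cF_def cG_def
    by (simp add: mv_row inner_axis')
  have sI: "(\<Sum>i\<in>I. l i * (c i \<bullet> ((x,t),(u,s)) - e i)) =
     (\<Sum>j\<in>UNIV. l (Inl (Inl j)) * ((A *v x) $ j - u $ j)) + (\<Sum>j\<in>UNIV. l (Inl (Inr j)) * (u $ j - (A *v x) $ j))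
     + (\<Sum>i\<in>S. l (Inr (Inl i)) * ((B *v x) $ i - b $ i))
     + (\<Sum>k\<in>Hf. l (Inr (Inr (Inl k))) * (haf k \<bullet> (x,t) - hbf k))
     + (\<Sum>k\<in>Hg. l (Inr (Inr (Inr k))) * (hag k \<bullet> (u,s) - hbg k))" for l x t u s
  proof -
    have finS: "finite S" by simp
    show ?thesis
      unfolding I_def c_def e_def cA1_def cA2_def cB_def cF_def cG_def
      using PF(1) PG(1) finS by (simp add: sum.Plus mv_row inner_axis' add.assoc o_def del: UNIV_Plus_UNIV)
  qed
  have w0I: "\<forall>i\<in>I. c i \<bullet> w0 \<le> e i"
  proof -
    have hf: "\<forall>k\<in>Hf. haf k \<bullet> (x0, t0) \<le> hbf k" unfolding t0_def using PF(5)[rule_format, OF PF(8)] by blast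
    have hg: "\<forall>k\<in>Hg. hag k \<bullet> (A *v x0, s0) \<le> hbg k" unfolding s0_def using PG(5)[rule_format, OF PG(8)] by blast
    show ?thesis unfolding w0_def cI using x0B hf hg by simp
  qed
  have pP: "ereal p \<le> \<phi> w" if H: "\<forall>i\<in>I. c i \<bullet> w \<le> e i" for w
  proof -
    obtain x t u s where w: "w = ((x,t),(u,s))" by (metis prod.collapse)
    have C: "(\<forall>j. (A *v x) $ j - u $ j \<le> 0) \<and> (\<forall>j. u $ j - (A *v x) $ j \<le> 0) \<and> (\<forall>i\<in>S. (B *v x) $ i \<le> b $ i) \<and>
     (\<forall>k\<in>Hf. haf k \<bullet> (x,t) \<le> hbf k) \<and> (\<forall>k\<in>Hg. hag k \<bullet> (u,s) \<le> hbg k)"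
      using H unfolding w cI .
    have "\<forall>j. u $ j = (A *v x) $ j"
    proof
      fix j have "(A *v x) $ j - u $ j \<le> 0" "u $ j - (A *v x) $ j \<le> 0" using C by blast+
      then show "u $ j = (A *v x) $ j" by linarith
    qed
    then have u: "u = A *v x" by (simp add: vec_eq_iff)
    have f1: "f x \<le> Fp (x,t)" using PF(4)[rule_format, of "(x,t)"] C by simp
    have g1: "g u \<le> Gp (u,s)" using PG(4)[rule_format, of "(u,s)"] C by simp
    have "ereal p \<le> f x + g (A *v x)" using pS C by blast
    also have "\<dots> \<le> Fp (x,t) + Gp (u,s)" using f1 g1 u by (simp add: add_mono)
    finally show ?thesis unfolding \<phi>_def w by simp
  qed
  obtain l where l: "\<forall>i\<in>I. 0 \<le> l i" "\<forall>w. ereal p \<le> \<phi> w + ereal (\<Sum>i\<in>I. l i * (c i \<bullet> w - e i))"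
    using mult_thm[OF cv nm w0ri finI w0I pP] by blast
  have l1: "0 \<le> l (Inl (Inl j))" for j using l(1) unfolding I_def by auto
  have l2: "0 \<le> l (Inl (Inr j))" for j using l(1) unfolding I_def by auto
  have l3: "0 \<le> l (Inr (Inl i))" if "i \<in> S" for i using l(1) that unfolding I_def by auto
  have l4: "0 \<le> l (Inr (Inr (Inl k)))" if "k \<in> Hf" for k using l(1) that unfolding I_def by auto
  have l5: "0 \<le> l (Inr (Inr (Inr k)))" if "k \<in> Hg" for k using l(1) that unfolding I_def by auto
  define y :: "real^'m" where "y = (\<chi> j. l (Inl (Inl j)) - l (Inl (Inr j)))"
  define z :: "real^'r" where "z = (\<chi> i. if i \<in> S then l (Inr (Inl i)) else 0)"
  have yeq: "y \<bullet> (A *v x - u) = (\<Sum>j\<in>UNIV. l (Inl (Inl j)) * ((A *v x) $ j - u $ j)) + (\<Sum>j\<in>UNIV. l (Inl (Inr j)) * (u $ j - (A *v x) $ j))" for x u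
  proof -
    have "y \<bullet> (A *v x - u) = (\<Sum>j\<in>UNIV. l (Inl (Inl j)) * ((A *v x) $ j - u $ j) + l (Inl (Inr j)) * (u $ j - (A *v x) $ j))"
      unfolding y_def inner_vec_def by (intro sum.cong refl) (simp add: algebra_simps)
    then show ?thesis by (simp add: sum.distrib)
  qed
  have zeq: "z \<bullet> (B *v x - b) = (\<Sum>i\<in>S. l (Inr (Inl i)) * ((B *v x) $ i - b $ i))" for x
  proof -
    have "z \<bullet> (B *v x - b) = (\<Sum>i\<in>UNIV. if i \<in> S then l (Inr (Inl i)) * ((B *v x) $ i - b $ i) else 0)"
      unfolding z_def inner_vec_def by (intro sum.cong refl) simp
    also have "\<dots> = (\<Sum>i\<in>UNIV \<inter> S. l (Inr (Inl i)) * ((B *v x) $ i - b $ i))"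
      by (rule sum.inter_restrict[symmetric]) simp
    finally show ?thesis by simp
  qed
  show ?thesis
  proof (intro exI[of _ y] exI[of _ z] conjI allI impI)
    fix i show "0 \<le> z $ i" unfolding z_def using l3 by simp
  next
    fix i assume "i \<notin> S" then show "z $ i = 0" unfolding z_def by simp
  next
    fix x u
    show "ereal p \<le> f x + g u + ereal (y \<bullet> (A *v x - u) + z \<bullet> (B *v x - b))"
    proof (cases "f x = \<infinity> \<or> g u = \<infinity>")
      case True
      then have fg: "f x + g u = \<infinity>" using nmf[of x] nmg[of u] by auto
      have e: "f x + g u + ereal (y \<bullet> (A *v x - u) + z \<bullet> (B *v x - b)) = \<infinity>" unfolding fg by simp
      show ?thesis unfolding e by simp
    next
      case False
      obtain rx where rx: "f x = ereal rx" using False nmf[of x] by (cases "f x") auto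
      obtain ru where ru: "g u = ereal ru" using False nmg[of u] by (cases "g u") auto
      have Fx: "Fp (x, rx) = ereal rx" "\<forall>k\<in>Hf. haf k \<bullet> (x, rx) \<le> hbf k" using PF(5) rx by blast+
      have Gu: "Gp (u, ru) = ereal ru" "\<forall>k\<in>Hg. hag k \<bullet> (u, ru) \<le> hbg k" using PG(5) ru by blast+
      have "ereal p \<le> \<phi> ((x,rx),(u,ru)) + ereal (\<Sum>i\<in>I. l i * (c i \<bullet> ((x,rx),(u,ru)) - e i))"
        using l(2) by blast
      then have p1: "p \<le> rx + ru + (\<Sum>i\<in>I. l i * (c i \<bullet> ((x,rx),(u,ru)) - e i))"
        unfolding \<phi>_def using Fx(1) Gu(1) by simp
      have sf: "(\<Sum>k\<in>Hf. l (Inr (Inr (Inl k))) * (haf k \<bullet> (x,rx) - hbf k)) \<le> 0"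
      proof (rule sum_nonpos)
        fix k assume k: "k \<in> Hf"
        show "l (Inr (Inr (Inl k))) * (haf k \<bullet> (x,rx) - hbf k) \<le> 0"
          using l4[OF k] Fx(2) k by (simp add: mult_nonneg_nonpos)
      qed
      have sg: "(\<Sum>k\<in>Hg. l (Inr (Inr (Inr k))) * (hag k \<bullet> (u,ru) - hbg k)) \<le> 0"
      proof (rule sum_nonpos)
        fix k assume k: "k \<in> Hg"
        show "l (Inr (Inr (Inr k))) * (hag k \<bullet> (u,ru) - hbg k) \<le> 0"
          using l5[OF k] Gu(2) k by (simp add: mult_nonneg_nonpos)
      qed
      have "p \<le> rx + ru + (y \<bullet> (A *v x - u) + z \<bullet> (B *v x - b))"
        using p1 sf sg unfolding sI yeq zeq by linarith
      then show ?thesis using rx ru by simp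
    qed
  qed
qed

lemma conj_upper:
  fixes f :: "real^'n \<Rightarrow> ereal" and g :: "real^'m \<Rightarrow> ereal"
    and A :: "real^'n^'m" and B :: "real^'n^'r" and b :: "real^'r"
  assumes f_proper: "proper_fun f" and g_proper: "proper_fun g"
    and H: "\<forall>x u. ereal p \<le> f x + g u + ereal (y \<bullet> (A *v x - u) + z \<bullet> (B *v x - b))"
  shows "Xi_fun f g A B b y z \<le> ereal (-p)"
proof -
  have nmf: "\<And>x. f x \<noteq> -\<infinity>" using f_proper unfolding proper_fun_def by auto
  have nmg: "\<And>x. g x \<noteq> -\<infinity>" using g_proper unfolding proper_fun_def by auto
  define q where "q = - (transpose A *v y) - (transpose B *v z)"
  define K where "K = - p - b \<bullet> z"
  have qx: "q \<bullet> x = - (y \<bullet> (A *v x)) - z \<bullet> (B *v x)" for x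
    unfolding q_def by (simp add: inner_diff_left dot_lmul_matrix)
  define af where "af = (\<lambda>x. ereal (q \<bullet> x) - f x)"
  define bg where "bg = (\<lambda>u. ereal (y \<bullet> u) - g u)"
  have key: "af x + bg u \<le> ereal K" for x u
  proof (cases "f x = \<infinity> \<or> g u = \<infinity>")
    case True
    then have e: "af x + bg u = -\<infinity>" unfolding af_def bg_def using nmf[of x] nmg[of u]
      by (cases "f x"; cases "g u") auto
    show ?thesis unfolding e by simp
  next
    case False
    obtain a where a: "f x = ereal a" using False nmf[of x] by (cases "f x") auto
    obtain a' where a': "g u = ereal a'" using False nmg[of u] by (cases "g u") auto
    have "p \<le> a + a' + (y \<bullet> (A *v x - u) + z \<bullet> (B *v x - b))" using H a a' by (metis plus_ereal.simps(1) ereal_less_eq(3))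
    then have "q \<bullet> x - a + (y \<bullet> u - a') \<le> K" unfolding qx K_def
      by (simp add: inner_diff_right algebra_simps inner_commute[of b z])
    then show ?thesis unfolding af_def bg_def using a a' by simp
  qed
  obtain x1 where x1: "f x1 \<noteq> \<infinity>" using f_proper unfolding proper_fun_def by auto
  obtain u1 where u1: "g u1 \<noteq> \<infinity>" using g_proper unfolding proper_fun_def by auto
  obtain a1 where a1: "af x1 = ereal a1" using x1 nmf[of x1] unfolding af_def by (cases "f x1") auto
  obtain b1 where b1: "bg u1 = ereal b1" using u1 nmg[of u1] unfolding bg_def by (cases "g u1") auto
  have le1: "af x \<le> ereal (K - b1)" for x
    using key[of x u1] b1 by (cases "af x") auto
  have cf: "conj_fun f q = (SUP x. af x)" unfolding conj_fun_def af_def by simp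
  have "(SUP x. af x) \<le> ereal (K - b1)" by (rule SUP_least) (rule le1)
  moreover have "ereal a1 \<le> (SUP x. af x)" unfolding a1[symmetric] by (rule SUP_upper) simp
  ultimately obtain \<alpha> where \<alpha>: "(SUP x. af x) = ereal \<alpha>" by (cases "SUP x. af x") auto
  have le2: "bg u \<le> ereal (K - \<alpha>)" for u
  proof (cases "bg u")
    case (real r)
    have "af x \<le> ereal (K - r)" for x using key[of x u] real by (cases "af x") auto
    then have "(SUP x. af x) \<le> ereal (K - r)" by (rule SUP_least)
    then show ?thesis using \<alpha> real by simp
  next
    case PInf
    then show ?thesis unfolding bg_def using nmg[of u] by (cases "g u") auto
  qed simp
  have cg: "conj_fun g y = (SUP u. bg u)" unfolding conj_fun_def bg_def by simp
  have "conj_fun g y \<le> ereal (K - \<alpha>)" unfolding cg by (rule SUP_least) (rule le2)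
  then have "Xi_fun f g A B b y z \<le> ereal \<alpha> + ereal (K - \<alpha>) + ereal (b \<bullet> z)"
    unfolding Xi_fun_def q_def[symmetric] cf \<alpha> by (intro add_mono order_refl)
  also have "\<dots> = ereal (-p)" unfolding K_def by simp
  finally show ?thesis .
qed

lemma weak_dual:
  fixes f :: "real^'n \<Rightarrow> ereal" and g :: "real^'m \<Rightarrow> ereal"
    and A :: "real^'n^'m" and B :: "real^'n^'r" and b :: "real^'r"
  assumes f_proper: "proper_fun f" and g_proper: "proper_fun g"
    and z0: "\<forall>i. 0 \<le> z $ i" and zS: "\<forall>i. i \<notin> S \<longrightarrow> z $ i = 0"
    and xf: "\<forall>i\<in>S. (B *v x) $ i \<le> b $ i"
  shows "- (f x + g (A *v x)) \<le> Xi_fun f g A B b y z"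
proof (cases "f x = \<infinity> \<or> g (A *v x) = \<infinity>")
  case True
  have nmf: "\<And>x. f x \<noteq> -\<infinity>" using f_proper unfolding proper_fun_def by auto
  have nmg: "\<And>x. g x \<noteq> -\<infinity>" using g_proper unfolding proper_fun_def by auto
  have e: "f x + g (A *v x) = \<infinity>" using True nmf[of x] nmg[of "A *v x"] by auto
  show ?thesis unfolding e by simp
next
  case False
  have nmf: "\<And>x. f x \<noteq> -\<infinity>" using f_proper unfolding proper_fun_def by auto
  have nmg: "\<And>x. g x \<noteq> -\<infinity>" using g_proper unfolding proper_fun_def by auto
  obtain a where a: "f x = ereal a" using False nmf[of x] by (cases "f x") auto
  obtain a' where a': "g (A *v x) = ereal a'" using False nmg[of "A *v x"] by (cases "g (A *v x)") auto
  define q where "q = - (transpose A *v y) - (transpose B *v z)"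
  have qx: "q \<bullet> x = - (y \<bullet> (A *v x)) - z \<bullet> (B *v x)"
    unfolding q_def by (simp add: inner_diff_left dot_lmul_matrix)
  have c1: "ereal (q \<bullet> x - a) \<le> conj_fun f q"
  proof -
    have "ereal (q \<bullet> x) - f x \<le> conj_fun f q" unfolding conj_fun_def by (rule SUP_upper) simp
    then show ?thesis using a by simp
  qed
  have c2: "ereal (y \<bullet> (A *v x) - a') \<le> conj_fun g y"
  proof -
    have "ereal (y \<bullet> (A *v x)) - g (A *v x) \<le> conj_fun g y" unfolding conj_fun_def by (rule SUP_upper) simp
    then show ?thesis using a' by simp
  qed
  have zneg: "z \<bullet> (B *v x - b) \<le> 0"
    unfolding inner_vec_def
  proof (rule sum_nonpos)
    fix i
    show "z $ i \<bullet> (B *v x - b) $ i \<le> 0"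
    proof (cases "i \<in> S")
      case True
      then have "(B *v x) $ i - b $ i \<le> 0" using xf by auto
      then show ?thesis using z0 by (simp add: mult_nonneg_nonpos)
    next
      case False
      then show ?thesis using zS by simp
    qed
  qed
  have "ereal (- (a + a')) \<le> ereal (q \<bullet> x - a) + ereal (y \<bullet> (A *v x) - a') + ereal (b \<bullet> z)"
    using zneg unfolding qx by (simp add: inner_diff_right inner_commute[of b z])
  also have "\<dots> \<le> Xi_fun f g A B b y z"
    unfolding Xi_fun_def q_def[symmetric] by (intro add_mono c1 c2 order_refl)
  finally show ?thesis using a a' by simp
qed

lemma Xi_not_minf:
  fixes f :: "real^'n \<Rightarrow> ereal" and g :: "real^'m \<Rightarrow> ereal"
    and A :: "real^'n^'m" and B :: "real^'n^'r" and b :: "real^'r"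
  assumes f_proper: "proper_fun f" and g_proper: "proper_fun g"
  shows "Xi_fun f g A B b y z \<noteq> -\<infinity>"
proof -
  have nmf: "\<And>x. f x \<noteq> -\<infinity>" using f_proper unfolding proper_fun_def by auto
  have nmg: "\<And>x. g x \<noteq> -\<infinity>" using g_proper unfolding proper_fun_def by auto
  obtain x1 where x1: "f x1 \<noteq> \<infinity>" using f_proper unfolding proper_fun_def by auto
  obtain u1 where u1: "g u1 \<noteq> \<infinity>" using g_proper unfolding proper_fun_def by auto
  define q where "q = - (transpose A *v y) - (transpose B *v z)"
  obtain a where a: "f x1 = ereal a" using x1 nmf[of x1] by (cases "f x1") auto
  obtain a' where a': "g u1 = ereal a'" using u1 nmg[of u1] by (cases "g u1") auto
  have "ereal (q \<bullet> x1) - f x1 \<le> conj_fun f q" unfolding conj_fun_def by (rule SUP_upper) simp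
  then have c1: "conj_fun f q \<noteq> -\<infinity>" using a by auto
  have "ereal (y \<bullet> u1) - g u1 \<le> conj_fun g y" unfolding conj_fun_def by (rule SUP_upper) simp
  then have c2: "conj_fun g y \<noteq> -\<infinity>" using a' by auto
  show ?thesis unfolding Xi_fun_def q_def[symmetric] using c1 c2
    by (cases "conj_fun f q"; cases "conj_fun g y") auto
qed

theorem mainTheorem5:
  fixes f :: "real^'n \<Rightarrow> ereal" and g :: "real^'m \<Rightarrow> ereal"
    and A :: "real^'n^'m" and B :: "real^'n^'r" and b :: "real^'r" and \<mu> :: "real^'r"
  assumes f_proper: "proper_fun f" and f_lsc: "lsc_fun f" and f_conv: "convex_fun f"
    and g_proper: "proper_fun g" and g_lsc: "lsc_fun g" and g_conv: "convex_fun g"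
    and bdd: "\<exists>c::real. \<forall>x. ereal c \<le> f x + g (A *v x)"
    and feas: "\<exists>x. x \<in> (if polyhedral_fun f then edom f else rel_interior (edom f))
                  \<and> A *v x \<in> (if polyhedral_fun g then edom g else rel_interior (edom g))
                  \<and> (\<forall>i. (B *v x) $ i \<le> b $ i)"
    and mu_pos: "\<forall>i. 0 < \<mu> $ i"
  shows "\<exists>y z. \<forall>y' z'. Xi_fun f g A B b y z + Psi_plus \<mu> z \<le> Xi_fun f g A B b y' z' + Psi_plus \<mu> z'"
proof -
  obtain x0 where x0f: "x0 \<in> (if polyhedral_fun f then edom f else rel_interior (edom f))"
    and x0g: "A *v x0 \<in> (if polyhedral_fun g then edom g else rel_interior (edom g))"
    and x0B: "\<forall>i. (B *v x0) $ i \<le> b $ i" using feas by blast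
  obtain c0 :: real where c0: "\<forall>x. ereal c0 \<le> f x + g (A *v x)" using bdd by blast
  have nmf: "\<And>x. f x \<noteq> -\<infinity>" using f_proper unfolding proper_fun_def by auto
  have nmg: "\<And>x. g x \<noteq> -\<infinity>" using g_proper unfolding proper_fun_def by auto
  have x0d: "f x0 < \<infinity>" using x0f rel_interior_subset unfolding edom_def by (auto split: if_splits)
  have x0e: "g (A *v x0) < \<infinity>" using x0g rel_interior_subset unfolding edom_def by (auto split: if_splits)
  have fin0: "f x0 + g (A *v x0) < \<infinity>" using x0d x0e nmf[of x0] nmg[of "A *v x0"]
    by (simp add: ereal_add_lt_top)
  define Feas where "Feas = (\<lambda>S::'r set. {x. \<forall>i\<in>S. (B *v x) $ i \<le> b $ i})"
  define V where "V = (\<lambda>S. INF x\<in>Feas S. f x + g (A *v x))"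
  define P where "P = (\<lambda>S. real_of_ereal (V S))"
  have x0F: "x0 \<in> Feas S" for S unfolding Feas_def using x0B by simp
  have VP: "V S = ereal (P S)" for S
  proof -
    have "ereal c0 \<le> V S" unfolding V_def by (rule INF_greatest) (use c0 in blast)
    moreover have "V S \<le> f x0 + g (A *v x0)" unfolding V_def by (rule INF_lower[OF x0F])
    ultimately show ?thesis unfolding P_def using fin0 by (cases "V S") auto
  qed
  have pS: "ereal (P S) \<le> f x + g (A *v x)" if "\<forall>i\<in>S. (B *v x) $ i \<le> b $ i" for S x
  proof -
    have "x \<in> Feas S" unfolding Feas_def using that by simp
    then have "V S \<le> f x + g (A *v x)" unfolding V_def by (rule INF_lower)
    then show ?thesis using VP by simp
  qed
  have dual: "\<exists>y z. (\<forall>i. 0 \<le> z $ i) \<and> (\<forall>i. i \<notin> S \<longrightarrow> z $ i = 0) \<and> Xi_fun f g A B b y z \<le> ereal (- P S)" for S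
  proof -
    obtain y z where yz: "\<forall>i. 0 \<le> z $ i" "\<forall>i. i \<notin> S \<longrightarrow> z $ i = 0"
      "\<forall>x u. ereal (P S) \<le> f x + g u + ereal (y \<bullet> (A *v x - u) + z \<bullet> (B *v x - b))"
      using lemma_D[OF f_proper f_conv g_proper g_conv x0f x0g, of S B b "P S"] x0B pS by blast
    show ?thesis using yz conj_upper[OF f_proper g_proper yz(3)] by blast
  qed
  have weak: "ereal (- P S) \<le> Xi_fun f g A B b y z"
    if zz: "\<forall>i. 0 \<le> z $ i" "\<forall>i. i \<notin> S \<longrightarrow> z $ i = 0" for S y z
  proof -
    have "- Xi_fun f g A B b y z \<le> f x + g (A *v x)" if "x \<in> Feas S" for x
    proof -
      have "- (f x + g (A *v x)) \<le> Xi_fun f g A B b y z"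
        by (rule weak_dual[OF f_proper g_proper]) (use zz \<open>x \<in> Feas S\<close> in \<open>auto simp: Feas_def\<close>)
      then show ?thesis by (simp add: ereal_uminus_le_reorder)
    qed
    then have "- Xi_fun f g A B b y z \<le> V S" unfolding V_def by (rule INF_greatest)
    then show ?thesis unfolding VP by (simp add: ereal_uminus_le_reorder)
  qed
  define ms where "ms = (\<lambda>S::'r set. \<Sum>i\<in>S. \<mu> $ i)"
  define obj where "obj = (\<lambda>S. ms S - P S)"
  have finU: "finite (UNIV :: 'r set set)" by simp
  define m where "m = Min (obj ` UNIV)"
  have "m \<in> obj ` UNIV" unfolding m_def by (rule Min_in) (use finU in auto)
  then obtain S0 where S0: "obj S0 = m" by auto
  have S0min: "obj S0 \<le> obj S" for S unfolding S0 m_def by (rule Min_le) (use finU in auto)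
  obtain y0 z0 where yz0: "\<forall>i. 0 \<le> z0 $ i" "\<forall>i. i \<notin> S0 \<longrightarrow> z0 $ i = 0"
    "Xi_fun f g A B b y0 z0 \<le> ereal (- P S0)" using dual[of S0] by blast
  have psi_eq: "Psi_plus \<mu> z = ereal (ms {i. z $ i \<noteq> 0})" if "\<forall>i. 0 \<le> z $ i" for z
  proof -
    have "(\<Sum>i\<in>UNIV. if z $ i \<noteq> 0 then \<mu> $ i else 0) = (\<Sum>i\<in>UNIV. if i \<in> {i. z $ i \<noteq> 0} then \<mu> $ i else 0)"
      by simp
    also have "\<dots> = (\<Sum>i\<in>UNIV \<inter> {i. z $ i \<noteq> 0}. \<mu> $ i)"
      by (rule sum.inter_restrict[symmetric]) simp
    finally have "(\<Sum>i\<in>UNIV. if z $ i \<noteq> 0 then \<mu> $ i else 0) = (\<Sum>i\<in>UNIV \<inter> {i. z $ i \<noteq> 0}. \<mu> $ i)" .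
    then show ?thesis unfolding Psi_plus_def ms_def using that by simp
  qed
  have ms_mono: "ms {i. z0 $ i \<noteq> 0} \<le> ms S0"
    unfolding ms_def
  proof (rule sum_mono2)
    show "{i. z0 $ i \<noteq> 0} \<subseteq> S0" using yz0(2) by auto
    fix i show "0 \<le> \<mu> $ i" using mu_pos less_imp_le by blast
  qed simp
  have lhs: "Xi_fun f g A B b y0 z0 + Psi_plus \<mu> z0 \<le> ereal (obj S0)"
  proof -
    have "Xi_fun f g A B b y0 z0 + Psi_plus \<mu> z0 \<le> ereal (- P S0) + ereal (ms S0)"
      unfolding psi_eq[OF yz0(1)] using yz0(3) ms_mono by (intro add_mono) simp_all
    then show ?thesis unfolding obj_def by simp
  qed
  show ?thesis
  proof (intro exI[of _ y0] exI[of _ z0] allI)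
    fix y' z'
    show "Xi_fun f g A B b y0 z0 + Psi_plus \<mu> z0 \<le> Xi_fun f g A B b y' z' + Psi_plus \<mu> z'"
    proof (cases "\<forall>i. 0 \<le> z' $ i")
      case False
      then have "Psi_plus \<mu> z' = \<infinity>" unfolding Psi_plus_def by simp
      moreover have "Xi_fun f g A B b y' z' \<noteq> -\<infinity>" by (rule Xi_not_minf[OF f_proper g_proper])
      ultimately have e: "Xi_fun f g A B b y' z' + Psi_plus \<mu> z' = \<infinity>" by simp
      show ?thesis unfolding e by simp
    next
      case True
      define S' where "S' = {i. z' $ i \<noteq> 0}"
      have "ereal (- P S') \<le> Xi_fun f g A B b y' z'" by (rule weak) (use True in \<open>auto simp: S'_def\<close>)
      then have "ereal (- P S') + ereal (ms S') \<le> Xi_fun f g A B b y' z' + Psi_plus \<mu> z'"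
        unfolding psi_eq[OF True] S'_def by (intro add_mono) simp_all
      then have "ereal (obj S') \<le> Xi_fun f g A B b y' z' + Psi_plus \<mu> z'" unfolding obj_def by simp
      moreover have "ereal (obj S0) \<le> ereal (obj S')" using S0min by simp
      ultimately show ?thesis using lhs by (meson order_trans)
    qed
  qed
qed

end
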